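(* Suppose (A1) and (A3) below hold. Fix $n\ge0$, $\alpha>1$ and a step size $0<\gamma\le\frac{\alpha-1}{\alpha BC^{1/2}}$; let $g=P_{\mu_n}\nabla\log(\mu_n/\pi)$ and $\phi_t=I-tg$. Then for every $x\in\mathbb R^d$ and $t\ge0$, $\|tJg(x)\|_{op}\le tB\sqrt C$; for every $0\le t<\frac{1}{B\sqrt C}$, $\phi_t$ is a diffeomorphism of $\mathbb R^d$; and for every $t\in[0,\gamma]$ and $x\in\mathbb R^d$, $\|(J\phi_t(x))^{-1}\|_{op}\le\alpha$. (A1) There exists $B>0$ with $\|k(x,\cdot)\|_{\mathcal H_0}\le B$ and $\big(\sum_{i=1}^d\|\partial_{x_i}k(x,\cdot)\|_{\mathcal H_0}^2\big)^{1/2}\le B$ for all $x$. (A3) There exists $C>0$ with $I_{Stein}(\mu_m|\pi)<C$ for all $m\ge0$.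
   Context: Target $\pi\propto e^{-V}$ on $\mathbb R^d$, $V\in C^2$; measures with densities identified with densities. $k$ positive semi-definite kernel with RKHS $\mathcal H_0$, $\mathcal H=\mathcal H_0^d$ with $\langle f,g\rangle_{\mathcal H}=\sum_i\langle f_i,g_i\rangle_{\mathcal H_0}$, $\int k(x,x)d\mu(x)<\infty$ for all $\mu\in\mathcal P_2$. $S_\mu f=\int k(x,\cdot)f(x)d\mu(x)\in\mathcal H$, $P_\mu f(y)=\int k(x,y)f(x)d\mu(x)$. $I_{Stein}(\mu|\pi)=\|S_\mu\nabla\log(\mu/\pi)\|_{\mathcal H}^2$. SVGD iterates with step $\gamma$: $\mu_0\in\mathcal P_2$ with density, $\mu_{m+1}=(I-\gamma P_{\mu_m}\nabla\log(\mu_m/\pi))_\#\mu_m$. $J$ denotes the Jacobian matrix, $\|\cdot\|_{op}$ the operator norm. *)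

theory Defs
  imports "HOL-Probability.Probability"
begin

definition dmeas :: "('a::euclidean_space \<Rightarrow> real) \<Rightarrow> 'a measure" where
  "dmeas p = density lborel (\<lambda>x. ennreal (p x))"

definition pi_dens :: "('a::euclidean_space \<Rightarrow> real) \<Rightarrow> 'a \<Rightarrow> real" where
  "pi_dens V x = exp (- V x) / (\<integral>y. exp (- V y) \<partial>lborel)"

definition grad :: "('a::euclidean_space \<Rightarrow> real) \<Rightarrow> 'a \<Rightarrow> 'a" where
  "grad f x = (\<Sum>b\<in>Basis. frechet_derivative f (at x) b *\<^sub>R b)"

definition score :: "('a::euclidean_space \<Rightarrow> real) \<Rightarrow> ('a \<Rightarrow> real) \<Rightarrow> 'a \<Rightarrow> 'a" where
  "score V p = grad (\<lambda>y. ln (p y / pi_dens V y))"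

definition P_op :: "('a::euclidean_space \<Rightarrow> 'a \<Rightarrow> real) \<Rightarrow> 'a measure \<Rightarrow> ('a \<Rightarrow> 'a) \<Rightarrow> 'a \<Rightarrow> 'a" where
  "P_op k \<mu> f y = (\<integral>x. k x y *\<^sub>R f x \<partial>\<mu>)"

text \<open>S_mu f as an element of H = H0^d, given by its components (indexed by the
  standard basis); the RKHS H0 is the Hilbert space 'h with feature map Phi,
  k(x,.) = Phi x.\<close>
definition S_op :: "('a::euclidean_space \<Rightarrow> 'h::{real_inner,banach,second_countable_topology})
     \<Rightarrow> 'a measure \<Rightarrow> ('a \<Rightarrow> 'a) \<Rightarrow> 'a \<Rightarrow> 'h" where
  "S_op \<Phi> \<mu> f b = (\<integral>x. (f x \<bullet> b) *\<^sub>R \<Phi> x \<partial>\<mu>)"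

definition H_norm2 :: "('a::euclidean_space \<Rightarrow> 'h::real_normed_vector) \<Rightarrow> real" where
  "H_norm2 F = (\<Sum>b\<in>Basis. (norm (F b))\<^sup>2)"

definition I_Stein :: "('a::euclidean_space \<Rightarrow> 'h::{real_inner,banach,second_countable_topology})
     \<Rightarrow> ('a \<Rightarrow> real) \<Rightarrow> ('a \<Rightarrow> real) \<Rightarrow> real" where
  "I_Stein \<Phi> V p = H_norm2 (S_op \<Phi> (dmeas p) (score V p))"

definition C1_map :: "('a::euclidean_space \<Rightarrow> 'b::real_normed_vector) \<Rightarrow> bool" where
  "C1_map f \<longleftrightarrow> (\<exists>f'. (\<forall>x. (f has_derivative blinfun_apply (f' x)) (at x)) \<and> continuous_on UNIV f')"

definition diffeo :: "('a::euclidean_space \<Rightarrow> 'a) \<Rightarrow> bool" where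
  "diffeo f \<longleftrightarrow> bij f \<and> C1_map f \<and> C1_map (inv f)"

end

theory Submission
  imports Defs
begin

lemma sum_basis_bound:
  fixes S :: "'a::euclidean_space \<Rightarrow> 'h::real_inner" and w :: 'h
  shows "norm (\<Sum>b\<in>Basis. (S b \<bullet> w) *\<^sub>R b) \<le> sqrt (\<Sum>b\<in>Basis. (norm (S b))\<^sup>2) * norm w"
proof -
  define x where "x = (\<Sum>b\<in>Basis. (S b \<bullet> w) *\<^sub>R (b::'a))"
  have xb: "x \<bullet> b = S b \<bullet> w" if "b \<in> Basis" for b
    using that by (simp add: x_def inner_sum_left inner_Basis if_distrib cong: if_cong)
  have "(norm x)\<^sup>2 = (\<Sum>b\<in>Basis. (x \<bullet> b) * (x \<bullet> b))"
    using power2_norm_eq_inner[of x] euclidean_inner[of x x] by simp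
  also have "\<dots> = (\<Sum>b\<in>Basis. (x \<bullet> b)\<^sup>2)" by (simp add: power2_eq_square)
  also have "\<dots> = (\<Sum>b\<in>Basis. (S b \<bullet> w)\<^sup>2)" by (simp add: xb)
  also have "\<dots> \<le> (\<Sum>b\<in>Basis. (norm (S b))\<^sup>2 * (norm w)\<^sup>2)"
  proof (rule sum_mono)
    fix b :: 'a
    have "\<bar>S b \<bullet> w\<bar> \<le> norm (S b) * norm w" by (rule Cauchy_Schwarz_ineq2)
    then have "\<bar>S b \<bullet> w\<bar>\<^sup>2 \<le> (norm (S b) * norm w)\<^sup>2" by (rule power_mono) simp
    then show "(S b \<bullet> w)\<^sup>2 \<le> (norm (S b))\<^sup>2 * (norm w)\<^sup>2" by (simp add: power_mult_distrib)
  qed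
  also have "\<dots> = (sqrt (\<Sum>b\<in>Basis. (norm (S b))\<^sup>2) * norm w)\<^sup>2"
    by (simp add: power_mult_distrib sum_distrib_right sum_nonneg)
  finally show ?thesis unfolding x_def[symmetric]
    by (rule power2_le_imp_le) (simp add: sum_nonneg)
qed

lemma blin_bound:
  fixes L :: "'a::euclidean_space \<Rightarrow>\<^sub>L 'h::real_normed_vector"
  assumes "sqrt (\<Sum>b\<in>Basis. (norm (blinfun_apply L b))\<^sup>2) \<le> B"
  shows "norm (blinfun_apply L v) \<le> B * norm v"
proof -
  have "blinfun_apply L v = blinfun_apply L (\<Sum>b\<in>Basis. (v \<bullet> b) *\<^sub>R b)"
    by (simp add: euclidean_representation)
  also have "\<dots> = (\<Sum>b\<in>Basis. (v \<bullet> b) *\<^sub>R blinfun_apply L b)"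
    by (simp add: blinfun.sum_right blinfun.scaleR_right)
  finally have eq: "blinfun_apply L v = (\<Sum>b\<in>Basis. (v \<bullet> b) *\<^sub>R blinfun_apply L b)" .
  have "norm (blinfun_apply L v) \<le> (\<Sum>b\<in>Basis. \<bar>v \<bullet> b\<bar> * \<bar>norm (blinfun_apply L b)\<bar>)"
    unfolding eq by (rule order_trans[OF norm_sum]) simp
  also have "\<dots> \<le> L2_set (\<lambda>b. v \<bullet> b) Basis * L2_set (\<lambda>b. norm (blinfun_apply L b)) Basis"
    by (rule L2_set_mult_ineq)
  also have "L2_set (\<lambda>b. v \<bullet> b) Basis = norm v"
    by (simp add: L2_set_def norm_eq_sqrt_inner euclidean_inner[of v v] power2_eq_square)
  also have "norm v * L2_set (\<lambda>b. norm (blinfun_apply L b)) Basis \<le> norm v * B"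
    using assms by (intro mult_left_mono) (simp_all add: L2_set_def)
  finally show ?thesis by (simp add: mult.commute)
qed

lemma inv_pert:
  fixes T :: "'a::euclidean_space \<Rightarrow> 'a"
  assumes lin: "linear T" and c: "0 < c" and bd: "\<forall>v. c * norm v \<le> norm (T v)"
  shows "bij T \<and> linear (inv T) \<and> (\<forall>v. T (inv T v) = v) \<and> (\<forall>v. inv T (T v) = v)
         \<and> (\<forall>v. norm (inv T v) \<le> norm v / c)"
proof -
  have inj: "inj T"
  proof (rule injI)
    fix x y assume "T x = T y"
    then have "T (x - y) = 0" using lin by (simp add: linear_diff)
    then have "c * norm (x - y) \<le> 0" using bd[rule_format, of "x - y"] by simp
    then show "x = y" using c by (simp add: mult_le_0_iff)
  qed
  have surj: "surj T" using linear_inj_imp_surj[OF lin inj] .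
  obtain T' where T': "linear T'" "\<forall>x. T' (T x) = x" "\<forall>x. T (T' x) = x"
    using linear_surjective_isomorphism[OF lin surj] by blast
  have bijT: "bij T" using inj surj by (simp add: bij_def)
  have invT: "inv T = T'"
    by (rule ext, metis T'(3) inj inv_f_f)
  have "norm (T' v) \<le> norm v / c" for v
    using bd[rule_format, of "T' v"] T'(3) c by (simp add: field_simps)
  then show ?thesis using T' bijT invT by auto
qed


lemma cont_by_bound:
  fixes f :: "'x::topological_space \<Rightarrow> 'b::real_normed_vector"
    and g :: "'x \<Rightarrow> 'c::real_normed_vector"
  assumes cg: "continuous_on UNIV g" and K: "0 \<le> K"
    and bd: "\<And>x y. norm (f x - f y) \<le> K * norm (g x - g y)"
  shows "continuous_on UNIV f"
  unfolding continuous_on_def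
proof (intro ballI)
  fix x :: 'x
  have "(g \<longlongrightarrow> g x) (at x within UNIV)" using cg by (simp add: continuous_on_def)
  then have "((\<lambda>y. g y - g x) \<longlongrightarrow> 0) (at x within UNIV)" by (rule LIM_zero)
  then have "((\<lambda>y. K *\<^sub>R (g y - g x)) \<longlongrightarrow> K *\<^sub>R 0) (at x within UNIV)"
    by (intro tendsto_scaleR tendsto_const)
  then have lim: "((\<lambda>y. K *\<^sub>R (g y - g x)) \<longlongrightarrow> 0) (at x within UNIV)" by simp
  have "((\<lambda>y. f y - f x) \<longlongrightarrow> 0) (at x within UNIV)"
    by (rule Lim_transform_bound[OF _ lim]) (simp add: bd K)
  then show "(f \<longlongrightarrow> f x) (at x within UNIV)" by (rule LIM_zero_cancel)
qed

lemma inv_cont: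
  fixes D E :: "'x::topological_space \<Rightarrow> ('a::real_normed_vector \<Rightarrow>\<^sub>L 'a)"
  assumes cD: "continuous_on UNIV D"
    and DE: "\<And>x v. blinfun_apply (D x) (blinfun_apply (E x) v) = v"
    and ED: "\<And>x v. blinfun_apply (E x) (blinfun_apply (D x) v) = v"
    and Eb: "\<And>x v. norm (blinfun_apply (E x) v) \<le> M * norm v" and M: "0 \<le> M"
  shows "continuous_on UNIV E"
proof (rule cont_by_bound[OF cD, of "M * M"])
  show "0 \<le> M * M" using M by simp
  fix x y
  show "norm (E x - E y) \<le> M * M * norm (D x - D y)"
  proof (rule norm_blinfun_bound)
    show "0 \<le> M * M * norm (D x - D y)" using M by simp
    fix v
    define b where "b = blinfun_apply (E y) v"
    have "blinfun_apply (E x - E y) v = blinfun_apply (E x) v - b"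
      by (simp add: b_def blinfun.diff_left)
    also have "\<dots> = blinfun_apply (E x) (v - blinfun_apply (D x) b)"
      by (simp add: blinfun.diff_right ED)
    also have "v - blinfun_apply (D x) b = blinfun_apply (D y - D x) b"
      by (simp add: b_def DE blinfun.diff_left)
    finally have eq: "blinfun_apply (E x - E y) v = blinfun_apply (E x) (blinfun_apply (D y - D x) b)" .
    have "norm (blinfun_apply (E x) (blinfun_apply (D y - D x) b)) \<le> M * norm (blinfun_apply (D y - D x) b)"
      by (rule Eb)
    also have "\<dots> \<le> M * (norm (D y - D x) * norm b)"
      by (intro mult_left_mono norm_blinfun M)
    also have "\<dots> \<le> M * (norm (D y - D x) * (M * norm v))"
      by (intro mult_left_mono M norm_ge_zero) (simp add: b_def Eb)
    also have "norm (D y - D x) = norm (D x - D y)" by (rule norm_minus_commute)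
    finally show "norm (blinfun_apply (E x - E y) v) \<le> M * M * norm (D x - D y) * norm v"
      unfolding eq by (simp add: algebra_simps)
  qed
qed

theorem lemma2:
  fixes V :: "'a::euclidean_space \<Rightarrow> real"
    and gradV :: "'a \<Rightarrow> 'a" and D2V :: "'a \<Rightarrow> ('a \<Rightarrow>\<^sub>L 'a)"
    and k :: "'a \<Rightarrow> 'a \<Rightarrow> real"
    and \<Phi> :: "'a \<Rightarrow> 'h::{real_inner,banach,second_countable_topology}"
    and D\<Phi> :: "'a \<Rightarrow> ('a \<Rightarrow>\<^sub>L 'h)"
    and p :: "nat \<Rightarrow> 'a \<Rightarrow> real"
    and \<gamma> \<alpha> B C :: real and n :: nat
  assumes V_C2: "\<forall>x. (V has_derivative (\<lambda>h. gradV x \<bullet> h)) (at x)"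
          "\<forall>x. (gradV has_derivative blinfun_apply (D2V x)) (at x)" "continuous_on UNIV D2V"
    and pi_normalisable: "integrable lborel (\<lambda>x. exp (- V x))"
    and kernel: "\<forall>x y. k x y = \<Phi> x \<bullet> \<Phi> y"
    and RKHS_dense: "closure (span (range \<Phi>)) = UNIV"
    and feature_C1: "\<forall>x. (\<Phi> has_derivative blinfun_apply (D\<Phi> x)) (at x)" "continuous_on UNIV D\<Phi>"
    and dens: "\<forall>m. p m \<in> borel_measurable borel \<and> (\<forall>x. 0 \<le> p m x) \<and> prob_space (dmeas (p m))"
    and P2: "integrable (dmeas (p 0)) (\<lambda>x. (norm x)\<^sup>2)"
    and S_defined: "\<forall>m. \<forall>b\<in>Basis. integrable (dmeas (p m)) (\<lambda>x. (score V (p m) x \<bullet> b) *\<^sub>R \<Phi> x)"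
    and SVGD: "\<forall>m. dmeas (p (Suc m)) =
                 distr (dmeas (p m)) lborel (\<lambda>x. x - \<gamma> *\<^sub>R P_op k (dmeas (p m)) (score V (p m)) x)"
    and A1: "B > 0" "\<forall>x. norm (\<Phi> x) \<le> B"
            "\<forall>x. sqrt (\<Sum>b\<in>Basis. (norm (blinfun_apply (D\<Phi> x) b))\<^sup>2) \<le> B"
    and A3: "C > 0" "\<forall>m. I_Stein \<Phi> V (p m) < C"
    and alpha: "\<alpha> > 1"
    and step: "0 < \<gamma>" "\<gamma> \<le> (\<alpha> - 1) / (\<alpha> * B * sqrt C)"
  shows "let g = P_op k (dmeas (p n)) (score V (p n));
             \<phi> = (\<lambda>t x. x - t *\<^sub>R g x)
         in (\<forall>x. \<forall>t\<ge>0. g differentiable (at x) \<and>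
                  onorm (\<lambda>v. t *\<^sub>R frechet_derivative g (at x) v) \<le> t * B * sqrt C)
          \<and> (\<forall>t. 0 \<le> t \<and> t < 1 / (B * sqrt C) \<longrightarrow> diffeo (\<phi> t))
          \<and> (\<forall>t\<in>{0..\<gamma>}. \<forall>x. bij (frechet_derivative (\<phi> t) (at x)) \<and>
                  onorm (inv (frechet_derivative (\<phi> t) (at x))) \<le> \<alpha>)"
proof -
  define g where "g = P_op k (dmeas (p n)) (score V (p n))"
  define S where "S = S_op \<Phi> (dmeas (p n)) (score V (p n))"
  define \<sigma> where "\<sigma> = sqrt (\<Sum>b\<in>Basis. (norm (S b))\<^sup>2)"
  define L where "L = B * sqrt C"
  have \<sigma>0: "0 \<le> \<sigma>" unfolding \<sigma>_def by (simp add: sum_nonneg)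
  have "(\<Sum>b\<in>Basis. (norm (S b))\<^sup>2) < C"
    using A3(2)[rule_format, of n] by (simp add: I_Stein_def H_norm2_def S_def)
  then have \<sigma>C: "\<sigma> \<le> sqrt C" unfolding \<sigma>_def by simp
  have L0: "0 < L" using A1(1) A3(1) by (simp add: L_def)
  have \<sigma>B: "\<sigma> * B \<le> L" unfolding L_def using \<sigma>C A1(1) by (simp add: mult.commute)
  have intS: "\<And>b. b \<in> Basis \<Longrightarrow> integrable (dmeas (p n)) (\<lambda>x. (score V (p n) x \<bullet> b) *\<^sub>R \<Phi> x)"
    using S_defined by blast
  have g_eq: "g y = (\<Sum>b\<in>Basis. (S b \<bullet> \<Phi> y) *\<^sub>R b)" for y
  proof -
    have fe: "(\<lambda>x. k x y *\<^sub>R score V (p n) x) =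
          (\<lambda>x. \<Sum>b\<in>Basis. (((score V (p n) x \<bullet> b) *\<^sub>R \<Phi> x) \<bullet> \<Phi> y) *\<^sub>R b)"
    proof
      fix x
      have "k x y *\<^sub>R score V (p n) x = k x y *\<^sub>R (\<Sum>b\<in>Basis. (score V (p n) x \<bullet> b) *\<^sub>R b)"
        by (simp add: euclidean_representation)
      also have "\<dots> = (\<Sum>b\<in>Basis. (((score V (p n) x \<bullet> b) *\<^sub>R \<Phi> x) \<bullet> \<Phi> y) *\<^sub>R b)"
        by (simp add: scaleR_sum_right kernel mult.commute)
      finally show "k x y *\<^sub>R score V (p n) x = (\<Sum>b\<in>Basis. (((score V (p n) x \<bullet> b) *\<^sub>R \<Phi> x) \<bullet> \<Phi> y) *\<^sub>R b)" .
    qed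
    have "g y = (\<integral>x. (\<Sum>b\<in>Basis. (((score V (p n) x \<bullet> b) *\<^sub>R \<Phi> x) \<bullet> \<Phi> y) *\<^sub>R b) \<partial>dmeas (p n))"
      unfolding g_def P_op_def fe ..
    also have "\<dots> = (\<Sum>b\<in>Basis. (\<integral>x. (((score V (p n) x \<bullet> b) *\<^sub>R \<Phi> x) \<bullet> \<Phi> y) *\<^sub>R b \<partial>dmeas (p n)))"
      by (rule Bochner_Integration.integral_sum[where f="\<lambda>b x. (((score V (p n) x \<bullet> b) *\<^sub>R \<Phi> x) \<bullet> \<Phi> y) *\<^sub>R b"])
         (intro integrable_scaleR_left integrable_inner_left intS)
    also have "\<dots> = (\<Sum>b\<in>Basis. (S b \<bullet> \<Phi> y) *\<^sub>R b)"
    proof (rule sum.cong[OF refl])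
      fix b :: 'a assume b: "b \<in> Basis"
      have "(\<integral>x. (((score V (p n) x \<bullet> b) *\<^sub>R \<Phi> x) \<bullet> \<Phi> y) *\<^sub>R b \<partial>dmeas (p n))
          = (\<integral>x. (((score V (p n) x \<bullet> b) *\<^sub>R \<Phi> x) \<bullet> \<Phi> y) \<partial>dmeas (p n)) *\<^sub>R b"
        by (rule integral_scaleR_left) (intro integrable_inner_left intS[OF b])
      also have "(\<integral>x. (((score V (p n) x \<bullet> b) *\<^sub>R \<Phi> x) \<bullet> \<Phi> y) \<partial>dmeas (p n)) = S b \<bullet> \<Phi> y"
        unfolding S_def S_op_def by (rule integral_inner_left) (rule intS[OF b])
      finally show "(\<integral>x. (((score V (p n) x \<bullet> b) *\<^sub>R \<Phi> x) \<bullet> \<Phi> y) *\<^sub>R b \<partial>dmeas (p n)) = (S b \<bullet> \<Phi> y) *\<^sub>R b" .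
    qed
    finally show ?thesis .
  qed
  then have g_fun: "g = (\<lambda>y. \<Sum>b\<in>Basis. (S b \<bullet> \<Phi> y) *\<^sub>R b)" by (rule ext)
  define DG where "DG x = Blinfun (\<lambda>v. \<Sum>b\<in>Basis. (S b \<bullet> blinfun_apply (D\<Phi> x) v) *\<^sub>R b)" for x
  have DG_apply: "blinfun_apply (DG x) = (\<lambda>v. \<Sum>b\<in>Basis. (S b \<bullet> blinfun_apply (D\<Phi> x) v) *\<^sub>R b)" for x
    unfolding DG_def
  proof (rule bounded_linear_Blinfun_apply, rule bounded_linear_sum)
    fix b :: 'a
    show "bounded_linear (\<lambda>v. (S b \<bullet> blinfun_apply (D\<Phi> x) v) *\<^sub>R b)"
      by (rule bounded_linear_compose[OF bounded_linear_scaleR_left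
            bounded_linear_compose[OF bounded_linear_inner_right blinfun.bounded_linear_right]])
  qed
  have g_der: "(g has_derivative blinfun_apply (DG x)) (at x)" for x
    unfolding g_fun DG_apply
    by (intro has_derivative_sum has_derivative_scaleR_left has_derivative_inner_right feature_C1(1)[rule_format])
  have DG_bd: "norm (blinfun_apply (DG x) v) \<le> L * norm v" for x v
  proof -
    have "norm (blinfun_apply (DG x) v) \<le> \<sigma> * norm (blinfun_apply (D\<Phi> x) v)"
      unfolding DG_apply \<sigma>_def by (rule sum_basis_bound)
    also have "\<dots> \<le> \<sigma> * (B * norm v)"
      by (intro mult_left_mono \<sigma>0 blin_bound) (use A1(3) in blast)
    also have "\<dots> \<le> L * norm v" using \<sigma>B by (simp add: mult.assoc[symmetric] mult_right_mono)
    finally show ?thesis .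
  qed
  have DG_cont: "continuous_on UNIV DG"
  proof (rule cont_by_bound[OF feature_C1(2) \<sigma>0])
    fix x y
    show "norm (DG x - DG y) \<le> \<sigma> * norm (D\<Phi> x - D\<Phi> y)"
    proof (rule norm_blinfun_bound)
      show "0 \<le> \<sigma> * norm (D\<Phi> x - D\<Phi> y)" using \<sigma>0 by simp
      fix v
      have "blinfun_apply (DG x - DG y) v = (\<Sum>b\<in>Basis. (S b \<bullet> blinfun_apply (D\<Phi> x - D\<Phi> y) v) *\<^sub>R b)"
        by (simp add: blinfun.diff_left DG_apply inner_diff_right scaleR_diff_left sum_subtractf)
      then have "norm (blinfun_apply (DG x - DG y) v) \<le> \<sigma> * norm (blinfun_apply (D\<Phi> x - D\<Phi> y) v)"
        unfolding \<sigma>_def by (simp add: sum_basis_bound)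
      also have "\<dots> \<le> \<sigma> * (norm (D\<Phi> x - D\<Phi> y) * norm v)"
        by (intro mult_left_mono \<sigma>0 norm_blinfun)
      finally show "norm (blinfun_apply (DG x - DG y) v) \<le> \<sigma> * norm (D\<Phi> x - D\<Phi> y) * norm v"
        by (simp add: mult.assoc)
    qed
  qed
  have fd_g: "frechet_derivative g (at x) = blinfun_apply (DG x)" for x
    using frechet_derivative_at[OF g_der] by simp
  have part1: "\<forall>x. \<forall>t\<ge>0. g differentiable (at x) \<and>
                  onorm (\<lambda>v. t *\<^sub>R frechet_derivative g (at x) v) \<le> t * B * sqrt C"
  proof (intro allI impI conjI)
    fix x and t :: real assume t: "0 \<le> t"
    show "g differentiable (at x)" using g_der by (rule differentiableI)
    show "onorm (\<lambda>v. t *\<^sub>R frechet_derivative g (at x) v) \<le> t * B * sqrt C"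
    proof (rule onorm_bound)
      show "0 \<le> t * B * sqrt C" using t A1(1) A3(1) by simp
      fix v
      have "norm (t *\<^sub>R frechet_derivative g (at x) v) = t * norm (blinfun_apply (DG x) v)"
        using t by (simp add: fd_g)
      also have "\<dots> \<le> t * (L * norm v)" by (intro mult_left_mono DG_bd t)
      finally show "norm (t *\<^sub>R frechet_derivative g (at x) v) \<le> t * B * sqrt C * norm v"
        by (simp add: L_def mult.assoc)
    qed
  qed
  have g_lip: "norm (g x - g y) \<le> L * norm (x - y)" for x y
  proof (rule differentiable_bound[of UNIV g "\<lambda>x. blinfun_apply (DG x)"])
    show "convex (UNIV :: 'a set)" by simp
    show "(g has_derivative blinfun_apply (DG x)) (at x within UNIV)" for x using g_der by simp
    show "onorm (blinfun_apply (DG x)) \<le> L" for x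
      by (rule onorm_bound) (use L0 DG_bd in auto)
  qed auto
  define DF where "DF t x = id_blinfun - t *\<^sub>R DG x" for t x
  have DF_apply: "blinfun_apply (DF t x) v = v - t *\<^sub>R blinfun_apply (DG x) v" for t x v
    by (simp add: DF_def blinfun.diff_left blinfun.scaleR_left)
  have F_der: "((\<lambda>x. x - t *\<^sub>R g x) has_derivative blinfun_apply (DF t x)) (at x)" for t x
  proof -
    have "((\<lambda>x. x - t *\<^sub>R g x) has_derivative (\<lambda>v. v - t *\<^sub>R blinfun_apply (DG x) v)) (at x)"
      by (intro has_derivative_diff has_derivative_ident has_derivative_scaleR_right g_der)
    moreover have "blinfun_apply (DF t x) = (\<lambda>v. v - t *\<^sub>R blinfun_apply (DG x) v)"
      by (rule ext) (rule DF_apply)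
    ultimately show ?thesis by simp
  qed
  have fd_F: "frechet_derivative (\<lambda>x. x - t *\<^sub>R g x) (at x) = blinfun_apply (DF t x)" for t x
    using frechet_derivative_at[OF F_der] by simp
  have DF_low: "(1 - t * L) * norm v \<le> norm (blinfun_apply (DF t x) v)" if t: "0 \<le> t" for t x v
  proof -
    have "norm (t *\<^sub>R blinfun_apply (DG x) v) \<le> t * L * norm v"
      using mult_left_mono[OF DG_bd[of x v] t] t by (simp add: mult.assoc)
    moreover have "norm v - norm (t *\<^sub>R blinfun_apply (DG x) v) \<le> norm (blinfun_apply (DF t x) v)"
      unfolding DF_apply by (rule norm_triangle_ineq2)
    ultimately show ?thesis by (simp add: algebra_simps)
  qed
  have DF_inv: "bij (blinfun_apply (DF t x)) \<and> linear (inv (blinfun_apply (DF t x)))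
      \<and> (\<forall>v. blinfun_apply (DF t x) (inv (blinfun_apply (DF t x)) v) = v)
      \<and> (\<forall>v. inv (blinfun_apply (DF t x)) (blinfun_apply (DF t x) v) = v)
      \<and> (\<forall>v. norm (inv (blinfun_apply (DF t x)) v) \<le> norm v / (1 - t * L))"
    if t: "0 \<le> t" "t * L < 1" for t x
    by (rule inv_pert) (use t DF_low in \<open>auto intro: bounded_linear.linear blinfun.bounded_linear_right\<close>)
  have part2: "diffeo (\<lambda>x. x - t *\<^sub>R g x)" if t: "0 \<le> t" "t * L < 1" for t
  proof -
    define F where "F = (\<lambda>x. x - t *\<^sub>R g x)"
    define c where "c = 1 - t * L"
    have c0: "0 < c" using t by (simp add: c_def)
    have tg: "norm (t *\<^sub>R (g x - g y)) \<le> t * L * norm (x - y)" for x y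
      using mult_left_mono[OF g_lip[of x y] t(1)] t(1) by (simp add: mult.assoc)
    have F_low: "c * norm (x - y) \<le> norm (F x - F y)" for x y
    proof -
      have "F x - F y = (x - y) - t *\<^sub>R (g x - g y)" by (simp add: F_def algebra_simps)
      then have "norm (x - y) - norm (t *\<^sub>R (g x - g y)) \<le> norm (F x - F y)"
        by (metis norm_triangle_ineq2)
      then show ?thesis using tg[of x y] by (simp add: c_def algebra_simps)
    qed
    have injF: "inj F"
    proof (rule injI)
      fix x y assume "F x = F y"
      then have "c * norm (x - y) \<le> 0" using F_low[of x y] by simp
      then show "x = y" using c0 by (simp add: mult_le_0_iff)
    qed
    have surjF: "surj F"
    proof -
      have "\<exists>x. F x = y" for y
      proof -
        have "\<exists>!x. (\<lambda>x. y + t *\<^sub>R g x) x = x"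
        proof (rule banach_fix_type[of "t * L"])
          show "0 \<le> t * L" using t L0 by simp
          show "t * L < 1" using t by simp
          show "\<forall>x x'. dist (y + t *\<^sub>R g x) (y + t *\<^sub>R g x') \<le> t * L * dist x x'"
            using tg by (simp add: dist_norm algebra_simps)
        qed
        then obtain x where "y + t *\<^sub>R g x = x" by blast
        then have "F x = y" by (simp add: F_def algebra_simps)
        then show ?thesis by blast
      qed
      then show ?thesis by (metis surjI)
    qed
    have bijF: "bij F" using injF surjF by (simp add: bij_def)
    define G where "G = inv F"
    have FG: "F (G y) = y" for y using surjF by (simp add: G_def surj_f_inv_f)
    have GF: "G (F x) = x" for x using injF by (simp add: G_def)
    have G_cont: "continuous_on UNIV G"
    proof (rule cont_by_bound[where g="\<lambda>y. y" and K="1 / c"])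
      show "continuous_on UNIV (\<lambda>y::'a. y)" by (rule continuous_on_id)
      show "0 \<le> 1 / c" using c0 by simp
      fix x y
      have "c * norm (G x - G y) \<le> norm (x - y)" using F_low[of "G x" "G y"] by (simp add: FG)
      then show "norm (G x - G y) \<le> 1 / c * norm (x - y)" using c0 by (simp add: field_simps)
    qed
    have DF_cont: "continuous_on UNIV (DF t)"
    proof (rule cont_by_bound[OF DG_cont t(1)])
      fix x y
      have "DF t x - DF t y = - (t *\<^sub>R (DG x - DG y))" by (simp add: DF_def algebra_simps)
      then show "norm (DF t x - DF t y) \<le> t * norm (DG x - DG y)" using t(1) by simp
    qed
    define E where "E x = Blinfun (inv (blinfun_apply (DF t x)))" for x
    have E_apply: "blinfun_apply (E x) = inv (blinfun_apply (DF t x))" for x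
      unfolding E_def using DF_inv[OF t, of x]
      by (intro bounded_linear_Blinfun_apply linear_conv_bounded_linear[THEN iffD1]) blast
    have E_cont: "continuous_on UNIV E"
    proof (rule inv_cont[OF DF_cont, where E=E and M="1 / c"])
      show "0 \<le> 1 / c" using c0 by simp
      fix x v
      show "blinfun_apply (DF t x) (blinfun_apply (E x) v) = v"
        using DF_inv[OF t, of x] by (simp add: E_apply)
      show "blinfun_apply (E x) (blinfun_apply (DF t x) v) = v"
        using DF_inv[OF t, of x] by (simp add: E_apply)
      show "norm (blinfun_apply (E x) v) \<le> 1 / c * norm v"
        using DF_inv[OF t, of x] by (simp add: E_apply c_def)
    qed
    have G_der: "(G has_derivative blinfun_apply (E (G y))) (at y)" for y
    proof -
      have "(G has_derivative blinfun_apply (E (G y))) (at (F (G y)))"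
      proof (rule has_derivative_inverse_on[of UNIV F "\<lambda>x. blinfun_apply (DF t x)"])
        show "(F has_derivative blinfun_apply (DF t x)) (at x)" for x
          unfolding F_def by (rule F_der)
        show "G (F x) = x" for x by (rule GF)
        show "blinfun_apply (DF t (G y)) \<circ> blinfun_apply (E (G y)) = id"
          using DF_inv[OF t, of "G y"] by (auto simp: E_apply)
      qed auto
      then show ?thesis by (simp add: FG)
    qed
    have "C1_map F" unfolding C1_map_def
      using F_der DF_cont unfolding F_def by blast
    moreover have "C1_map G" unfolding C1_map_def
    proof (intro exI conjI allI)
      show "(G has_derivative blinfun_apply ((E \<circ> G) y)) (at y)" for y using G_der by simp
      show "continuous_on UNIV (E \<circ> G)"
        by (rule continuous_on_compose[OF G_cont continuous_on_subset[OF E_cont]]) simp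
    qed
    ultimately have "diffeo F" unfolding diffeo_def G_def using bijF by blast
    then show ?thesis by (simp add: F_def)
  qed
  have part3: "bij (frechet_derivative (\<lambda>x. x - t *\<^sub>R g x) (at x)) \<and>
                  onorm (inv (frechet_derivative (\<lambda>x. x - t *\<^sub>R g x) (at x))) \<le> \<alpha>"
    if t: "t \<in> {0..\<gamma>}" for t x
  proof -
    have t0: "0 \<le> t" and tg: "t \<le> \<gamma>" using t by auto
    have "\<gamma> * L \<le> (\<alpha> - 1) / \<alpha>"
    proof -
      have "\<gamma> * L \<le> (\<alpha> - 1) / (\<alpha> * B * sqrt C) * L"
        using step(2) L0 by (intro mult_right_mono) auto
      also have "\<dots> = ((\<alpha> - 1) * (B * sqrt C)) / (\<alpha> * (B * sqrt C))"
        by (simp add: L_def mult.assoc)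
      also have "\<dots> = (\<alpha> - 1) / \<alpha>"
        using L0 by (intro mult_divide_mult_cancel_right) (use A1(1) A3(1) in simp)
      finally show ?thesis .
    qed
    then have tL: "t * L \<le> (\<alpha> - 1) / \<alpha>"
      using mult_right_mono[OF tg, of L] L0 by linarith
    then have tL1: "t * L < 1" using alpha by (smt (verit) divide_less_eq_1_pos)
    have ca: "1 / (1 - t * L) \<le> \<alpha>"
    proof -
      have "\<alpha> * (t * L) \<le> \<alpha> - 1" using tL alpha by (simp add: field_simps)
      then have "1 \<le> \<alpha> * (1 - t * L)" by (simp add: algebra_simps)
      then show ?thesis using tL1 by (simp add: field_simps)
    qed
    note I = DF_inv[OF t0 tL1, of x]
    show ?thesis unfolding fd_F
    proof
      show "bij (blinfun_apply (DF t x))" using I by blast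
      show "onorm (inv (blinfun_apply (DF t x))) \<le> \<alpha>"
      proof (rule onorm_bound)
        show "0 \<le> \<alpha>" using alpha by simp
        fix v
        have "norm (inv (blinfun_apply (DF t x)) v) \<le> norm v / (1 - t * L)" using I by blast
        also have "\<dots> = 1 / (1 - t * L) * norm v" by simp
        also have "\<dots> \<le> \<alpha> * norm v" by (intro mult_right_mono ca norm_ge_zero)
        finally show "norm (inv (blinfun_apply (DF t x)) v) \<le> \<alpha> * norm v" .
      qed
    qed
  qed
  have "\<forall>t. 0 \<le> t \<and> t < 1 / (B * sqrt C) \<longrightarrow> diffeo (\<lambda>x. x - t *\<^sub>R g x)"
  proof (intro allI impI)
    fix t assume "0 \<le> t \<and> t < 1 / (B * sqrt C)"
    then have "0 \<le> t" "t * L < 1" using L0 by (auto simp: L_def field_simps)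
    then show "diffeo (\<lambda>x. x - t *\<^sub>R g x)" by (rule part2)
  qed
  then show ?thesis
    unfolding Let_def g_def[symmetric] using part1 part3 by blast
qed

end
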